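(* Let $n\ge1$ and $\pi\in S_n$, and set $w=\hat\pi$. Then $\pi\in\mathcal C_n(321)$ if and only if $\hat\pi_1=n$ and $$N_{\underline{32}\,\underline{41}}(w)+N_{\underline{14}\,\underline{23}}(w)+N_{\underline{41}\,\underline{32}}(w)+M(\pi)=0,$$ where $M(\pi)=\#\{(i,k): i+2\le k\le n,\ \hat\pi_k<\hat\pi_i<\hat\pi_{i+1}<\pi(\hat\pi_k)\}$. In particular, $\pi\in\mathcal C_n(321)$ iff $\hat\pi_1=n$, $\hat\pi$ avoids $\underline{32}\,\underline{41}$, $\underline{14}\,\underline{23}$, $\underline{41}\,\underline{32}$, and $M(\pi)=0$.
   Context: Permutations of $[n]$ are written in one-line notation $\pi=\pi_1\cdots\pi_n$. A permutation contains $321$ if there are $i<j<k$ with $\pi_i>\pi_j>\pi_k$. $\mathcal C_n$ is the set of cyclic permutations of $[n]$ (a single $n$-cycle), and $\mathcal C_n(321)$ those avoiding $321$. The standard cycle notation of $\pi$ writes each cycle with its largest element first, as $(m,\pi(m),\pi^2(m),\dots)$, and lists the cycles in increasing order of their largest elements. $\theta:S_n\to S_n$ sends $\pi$ to the permutation whose one-line notation is the standard cycle notation of $\pi$ with parentheses erased; $\hat\pi=\theta(\pi)$. For a sequence $w=w_1\cdots w_N$ of distinct integers, with pairs $(i,j)$ ranging over $i+2\le j\le N-1$: $N_{\underline{32}\,\underline{41}}(w)=\#\{(i,j): w_{j+1}<w_{i+1}<w_i<w_j\}$; $N_{\underline{14}\,\underline{23}}(w)=\#\{(i,j): w_i<w_j<w_{j+1}<w_{i+1}\}$;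 $N_{\underline{41}\,\underline{32}}(w)=\#\{(i,j): w_{i+1}<w_{j+1}<w_j<w_i\}$. $w$ avoids such a pattern if its count is $0$. *)

theory Defs
  imports "HOL-Combinatorics.Permutations"
begin

text \<open>Permutations of [n] are functions nat => nat with pi permutes {1..n}.
  One-line notation is 1-indexed: pi_i = pi i.\<close>

definition cyclic_perm :: "nat \<Rightarrow> (nat \<Rightarrow> nat) \<Rightarrow> bool" where
  "cyclic_perm n p \<longleftrightarrow> p permutes {1..n} \<and> (\<forall>x\<in>{1..n}. \<exists>k. (p ^^ k) 1 = x)"

definition avoids321 :: "nat \<Rightarrow> (nat \<Rightarrow> nat) \<Rightarrow> bool" where
  "avoids321 n p \<longleftrightarrow> \<not> (\<exists>i j k. 1 \<le> i \<and> i < j \<and> j < k \<and> k \<le> n \<and> p i > p j \<and> p j > p k)"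

definition cyc_len :: "(nat \<Rightarrow> nat) \<Rightarrow> nat \<Rightarrow> nat" where
  "cyc_len p m = (LEAST k. 0 < k \<and> (p ^^ k) m = m)"

definition cyc_leader :: "(nat \<Rightarrow> nat) \<Rightarrow> nat \<Rightarrow> bool" where
  "cyc_leader p m \<longleftrightarrow> (\<forall>k. (p ^^ k) m \<le> m)"

text \<open>Standard cycle notation with parentheses erased, as a list (theta(pi) in one-line notation).\<close>
definition theta :: "nat \<Rightarrow> (nat \<Rightarrow> nat) \<Rightarrow> nat list" where
  "theta n p = concat (map (\<lambda>m. map (\<lambda>k. (p ^^ k) m) [0..<cyc_len p m])
                           (filter (cyc_leader p) [1..<Suc n]))"

definition wat :: "nat list \<Rightarrow> nat \<Rightarrow> nat" where
  "wat w i = w ! (i - 1)"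

definition N_3241 :: "nat list \<Rightarrow> nat" where
  "N_3241 w = card {(i, j). 1 \<le> i \<and> i + 2 \<le> j \<and> j \<le> length w - 1 \<and>
      wat w (j+1) < wat w (i+1) \<and> wat w (i+1) < wat w i \<and> wat w i < wat w j}"

definition N_1423 :: "nat list \<Rightarrow> nat" where
  "N_1423 w = card {(i, j). 1 \<le> i \<and> i + 2 \<le> j \<and> j \<le> length w - 1 \<and>
      wat w i < wat w j \<and> wat w j < wat w (j+1) \<and> wat w (j+1) < wat w (i+1)}"

definition N_4132 :: "nat list \<Rightarrow> nat" where
  "N_4132 w = card {(i, j). 1 \<le> i \<and> i + 2 \<le> j \<and> j \<le> length w - 1 \<and>
      wat w (i+1) < wat w (j+1) \<and> wat w (j+1) < wat w j \<and> wat w j < wat w i}"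

definition Mcount :: "nat \<Rightarrow> (nat \<Rightarrow> nat) \<Rightarrow> nat" where
  "Mcount n p = (let w = theta n p in card {(i, k). 1 \<le> i \<and> i + 2 \<le> k \<and> k \<le> n \<and>
      wat w k < wat w i \<and> wat w i < wat w (i+1) \<and> wat w (i+1) < p (wat w k)})"

end

theory Submission
  imports Defs
begin


lemma perm_of: assumes "p permutes {1..(n::nat)}" shows "permutation p"
  using permutes_imp_permutation[OF _ assms] by simp

lemma funpow_period: "(p ^^ T) x = x \<Longrightarrow> (p ^^ (T*q)) x = x"
proof (induction q)
  case 0 then show ?case by simp
next
  case (Suc q)
  have "(p ^^ (T * Suc q)) x = (p ^^ T) ((p ^^ (T*q)) x)"
    by (simp add: funpow_add)
  then show ?case using Suc by simp
qed

lemma orbit_back: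
  assumes "permutation p"
  shows "\<exists>c. (p ^^ c) ((p ^^ j) x) = x"
proof -
  obtain T where T: "T > 0" "(p ^^ T) x = x" using permutation_self[OF assms] by blast
  have "(p ^^ (T*j)) x = x" using funpow_period[OF T(2)] .
  moreover have "T*j - j + j = T*j" using T(1) by simp
  ultimately have "(p ^^ (T*j - j)) ((p ^^ j) x) = x"
    by (metis comp_apply funpow_add)
  then show ?thesis by blast
qed

lemma cyc_len_props:
  assumes "permutation p"
  shows "0 < cyc_len p m" "(p ^^ cyc_len p m) m = m"
    "\<And>k. 0 < k \<Longrightarrow> k < cyc_len p m \<Longrightarrow> (p ^^ k) m \<noteq> m"
proof -
  obtain T where T: "T > 0" "(p ^^ T) m = m" using permutation_self[OF assms] by blast
  have "0 < cyc_len p m \<and> (p ^^ cyc_len p m) m = m"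
    unfolding cyc_len_def by (rule LeastI[of _ T]) (use T in auto)
  then show "0 < cyc_len p m" "(p ^^ cyc_len p m) m = m" by auto
  show "\<And>k. 0 < k \<Longrightarrow> k < cyc_len p m \<Longrightarrow> (p ^^ k) m \<noteq> m"
    unfolding cyc_len_def using not_less_Least by blast
qed

lemma cyclic_struct:
  assumes n: "n \<ge> 1" and pp: "p permutes {1..n}" and cyc: "cyclic_perm n p"
  defines "f \<equiv> \<lambda>k. (p ^^ k) n"
  shows "theta n p = map f [0..<n]" "inj_on f {0..<n}" "f ` {0..<n} = {1..n}" "f n = n"
proof -
  have perm: "permutation p" using pp perm_of by blast
  define c where "c = cyc_len p n"
  have c12: "0 < c" "f c = n"
    using cyc_len_props[OF perm, of n] unfolding c_def f_def by auto
  have c3: "f k \<noteq> n" if "0 < k" "k < c" for k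
    using cyc_len_props(3)[OF perm that[unfolded c_def]] unfolding f_def .
  note c = c12 c3
  have inS: "f k \<in> {1..n}" for k unfolding f_def
    using permutes_in_funpow_image[OF pp] n by auto
  have allin: "\<exists>k. f k = x" if xin: "x \<in> {1..n}" for x
  proof -
    note cyc2 = cyc[unfolded cyclic_perm_def, THEN conjunct2, rule_format]
    obtain b where b: "(p ^^ b) 1 = x" using cyc2[OF xin] by blast
    have "n \<in> {1..n}" using n by simp
    then obtain a where a: "(p ^^ a) 1 = n" using cyc2 by blast
    obtain c' where c': "(p ^^ c') ((p ^^ a) 1) = 1" using orbit_back[OF perm, of a 1] by blast
    then have c': "(p ^^ c') n = 1" using a by simp
    have "(p ^^ (b + c')) n = x" using b c' by (simp add: funpow_add)
    then show ?thesis unfolding f_def by blast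
  qed
  have per: "f k = f (k mod c)" for k
  proof -
    have "(p ^^ (c * (k div c))) n = n" using funpow_period[where p=p and T=c and x=n] c(2) unfolding f_def by blast
    moreover have "k = k mod c + c * (k div c)" by simp
    ultimately show ?thesis unfolding f_def by (metis comp_apply funpow_add)
  qed
  have fadd: "f (a + b) = (p ^^ a) (f b)" for a b unfolding f_def by (simp add: funpow_add)
  have injc: "inj_on f {0..<c}"
  proof (rule inj_onI, rule ccontr)
    fix i j assume i: "i \<in> {0..<c}" and j: "j \<in> {0..<c}" and e: "f i = f j" and ne: "i \<noteq> j"
    have H: False if "i < j" "j < c" "f i = f j" for i j
    proof -
      from that have "f (c - j + i) = f c" using fadd[of "c-j" i] fadd[of "c-j" j] by simp
      moreover have "0 < c - j + i" "c - j + i < c" using \<open>i<j\<close> \<open>j<c\<close> by auto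
      ultimately show False using c(3)[of "c - j + i"] c(2) by simp
    qed
    show False using H[of i j] H[of j i] i j e ne by (cases "i < j") auto
  qed
  have imc: "f ` {0..<c} = {1..n}"
  proof
    show "f ` {0..<c} \<subseteq> {1..n}" using inS by auto
    show "{1..n} \<subseteq> f ` {0..<c}"
    proof
      fix x assume "x \<in> {1..n}"
      then obtain k where "f k = x" using allin by blast
      then have "f (k mod c) = x" using per by simp
      moreover have "k mod c \<in> {0..<c}" using c(1) by simp
      ultimately show "x \<in> f ` {0..<c}" by blast
    qed
  qed
  have cn: "c = n"
  proof -
    have "card (f ` {0..<c}) = c" using card_image[OF injc] by simp
    then show ?thesis using imc by simp
  qed
  show "inj_on f {0..<n}" "f ` {0..<n} = {1..n}" "f n = n" using injc imc c(2) unfolding cn by simp_all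
  have lead: "cyc_leader p m \<longleftrightarrow> m = n" if "m \<in> {1..n}" for m
  proof
    assume L: "cyc_leader p m"
    show "m = n"
    proof (rule ccontr)
      assume "m \<noteq> n"
      have "m \<in> f ` {0..<c}" using imc that by simp
      then obtain r where r: "r < c" "f r = m" by auto
      have "(p ^^ (c - r)) m = f c" using fadd[of "c-r" r] r by simp
      then have "(p ^^ (c - r)) m = n" using c(2) by simp
      moreover have "m < n" using that \<open>m \<noteq> n\<close> by auto
      moreover have "(p ^^ (c - r)) m \<le> m" using L unfolding cyc_leader_def by blast
      ultimately show False by simp
    qed
  next
    assume "m = n"
    have "(p ^^ k) n \<le> n" for k using inS[of k] unfolding f_def by simp
    then show "cyc_leader p m" unfolding cyc_leader_def using \<open>m = n\<close> by simp
  qed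
  have filt: "filter (cyc_leader p) [1..<Suc n] = [n]"
  proof -
    have "[1..<Suc n] = [1..<n] @ [n]" using n by simp
    moreover have "filter (cyc_leader p) [1..<n] = []"
      using lead by (auto simp: filter_empty_conv)
    moreover have "cyc_leader p n" using lead n by auto
    ultimately show ?thesis by simp
  qed
  show "theta n p = map f [0..<n]"
    unfolding theta_def filt using cn c_def f_def by simp
qed


lemma exc_321:
  assumes pp: "p permutes {1..n}" and xy: "1 \<le> x" "x < y" "y \<le> n" and e: "y < p y" "p y < p x"
  shows "\<not> avoids321 n p"
proof
  assume av: "avoids321 n p"
  have injp: "inj p" using permutes_inj[OF pp] .
  have inj: "inj_on p {y<..n}" by (rule inj_on_subset[OF injp]) simp
  have px: "p x \<in> {1..n}" using permutes_in_image[OF pp] xy by simp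
  have sub: "p ` {y<..n} \<subseteq> {p y<..n} - {p x}"
  proof
    fix z assume "z \<in> p ` {y<..n}"
    then obtain k where k: "y < k" "k \<le> n" "z = p k" by auto
    have "\<not> (p k < p y)"
    proof
      assume "p k < p y"
      then have "\<exists>i j k'. 1 \<le> i \<and> i < j \<and> j < k' \<and> k' \<le> n \<and> p i > p j \<and> p j > p k'"
        using xy e k by (intro exI[of _ x] exI[of _ y] exI[of _ k]) simp
      then show False using av unfolding avoids321_def by simp
    qed
    moreover have "p k \<noteq> p y" using k by (simp add: inj_eq[OF injp])
    moreover have "p k \<noteq> p x" using k xy by (simp add: inj_eq[OF injp])
    moreover have "p k \<in> {1..n}" using permutes_in_image[OF pp] k xy by simp
    ultimately show "z \<in> {p y<..n} - {p x}" using k by auto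
  qed
  have "card (p ` {y<..n}) \<le> card ({p y<..n} - {p x})"
    by (rule card_mono[OF _ sub]) simp
  moreover have "card (p ` {y<..n}) = n - y" using card_image[OF inj] by simp
  moreover have "card ({p y<..n} - {p x}) = n - p y - 1" using px e by simp
  moreover have "p y \<le> n" using permutes_in_image[OF pp, of y] xy by simp
  ultimately show False using e px by simp
qed

lemma def_321:
  assumes pp: "p permutes {1..n}" and xy: "1 \<le> x" "x < y" "y \<le> n" and e: "p y < p x" "p x < x"
  shows "\<not> avoids321 n p"
proof
  assume av: "avoids321 n p"
  have injp: "inj p" using permutes_inj[OF pp] .
  have inj: "inj_on p {1..<x}" by (rule inj_on_subset[OF injp]) simp
  have py: "p y \<in> {1..n}" using permutes_in_image[OF pp] xy by simp
  have sub: "p ` {1..<x} \<subseteq> {1..<p x} - {p y}"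
  proof
    fix z assume "z \<in> p ` {1..<x}"
    then obtain k where k: "1 \<le> k" "k < x" "z = p k" by auto
    have "\<not> (p k > p x)"
    proof
      assume "p k > p x"
      then have "\<exists>i j k'. 1 \<le> i \<and> i < j \<and> j < k' \<and> k' \<le> n \<and> p i > p j \<and> p j > p k'"
        using xy e k by (intro exI[of _ k] exI[of _ x] exI[of _ y]) simp
      then show False using av unfolding avoids321_def by simp
    qed
    moreover have "p k \<noteq> p x" using k by (simp add: inj_eq[OF injp])
    moreover have "p k \<noteq> p y" using k xy by (simp add: inj_eq[OF injp])
    moreover have "p k \<in> {1..n}" using permutes_in_image[OF pp] k xy by simp
    ultimately show "z \<in> {1..<p x} - {p y}" using k by auto
  qed
  have "card (p ` {1..<x}) \<le> card ({1..<p x} - {p y})"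
    by (rule card_mono[OF _ sub]) simp
  moreover have "card (p ` {1..<x}) = x - 1" using card_image[OF inj] by simp
  moreover have "card ({1..<p x} - {p y}) = p x - 1 - 1" using py e by simp
  ultimately show False using e py by simp
qed



lemma theta_first:
  assumes n: "n \<ge> 1" and pp: "p permutes {1..n}" and w1: "wat (theta n p) 1 = n"
  shows "cyclic_perm n p"
proof -
  have perm: "permutation p" using perm_of[OF pp] .
  define L where "L = filter (cyc_leader p) [1..<Suc n]"
  have setL: "set L = {m \<in> {1..n}. cyc_leader p m}" unfolding L_def by auto
  have orbmax: "\<exists>M j. cyc_leader p M \<and> M \<in> {1..n} \<and> (p ^^ j) x = M" if xin: "x \<in> {1..n}" for x
  proof -
    define Orb where "Orb = range (\<lambda>k. (p ^^ k) x)"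
    have Osub: "Orb \<subseteq> {1..n}" unfolding Orb_def using permutes_in_funpow_image[OF pp xin] by auto
    have fin: "finite Orb" using finite_subset[OF Osub] by simp
    have ne: "Orb \<noteq> {}" unfolding Orb_def by simp
    define M where "M = Max Orb"
    have MOrb: "M \<in> Orb" unfolding M_def using Max_in[OF fin ne] .
    then obtain j where j: "(p ^^ j) x = M" unfolding Orb_def by auto
    have "(p ^^ k) M \<le> M" for k
    proof -
      have "(p ^^ k) M = (p ^^ (k + j)) x" using j by (simp add: funpow_add)
      also have "\<dots> \<in> Orb" unfolding Orb_def by simp
      then have "(p ^^ (k + j)) x \<le> M" unfolding M_def using Max_ge[OF fin] by simp
      finally show ?thesis .
    qed
    then have "cyc_leader p M" unfolding cyc_leader_def by simp
    moreover have "M \<in> {1..n}" using MOrb Osub by auto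
    ultimately show ?thesis using j by blast
  qed
  have "1 \<in> {1..n}" using n by simp
  then have "L \<noteq> []" using orbmax[of 1] setL by fastforce
  then obtain m0 rest where L: "L = m0 # rest" by (cases L) auto
  have cl: "0 < cyc_len p m0" using cyc_len_props(1)[OF perm] .
  have "theta n p = map (\<lambda>k. (p ^^ k) m0) [0..<cyc_len p m0] @ concat (map (\<lambda>m. map (\<lambda>k. (p ^^ k) m) [0..<cyc_len p m]) rest)"
    unfolding theta_def L_def[symmetric] L by simp
  also have "[0..<cyc_len p m0] = 0 # [1..<cyc_len p m0]" using cl upt_conv_Cons by simp
  finally have "theta n p ! 0 = m0" by simp
  then have m0: "m0 = n" using w1 unfolding wat_def by simp
  have "sorted L" unfolding L_def by (rule sorted_wrt_filter) (rule sorted_upt)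
  then have low: "n \<le> m" if "m \<in> set L" for m using that unfolding L m0 by auto
  have reach: "\<exists>c. (p ^^ c) n = x" if xin: "x \<in> {1..n}" for x
  proof -
    obtain M j where M: "cyc_leader p M" "M \<in> {1..n}" "(p ^^ j) x = M" using orbmax[OF xin] by blast
    have "M \<in> set L" using setL M by simp
    then have "M = n" using low M(2) by fastforce
    then show ?thesis using orbit_back[OF perm, of j x] M(3) by auto
  qed
  obtain a where a: "(p ^^ a) 1 = n"
  proof -
    obtain M j where M: "cyc_leader p M" "M \<in> {1..n}" "(p ^^ j) 1 = M" using orbmax \<open>1 \<in> {1..n}\<close> by blast
    have "M \<in> set L" using setL M by simp
    then have "M = n" using low M(2) by fastforce
    then show ?thesis using that M(3) by blast
  qed
  have "\<forall>x\<in>{1..n}. \<exists>k. (p ^^ k) 1 = x"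
  proof
    fix x assume "x \<in> {1..n}"
    then obtain c where "(p ^^ c) n = x" using reach by blast
    then have "(p ^^ (c + a)) 1 = x" using a by (simp add: funpow_add)
    then show "\<exists>k. (p ^^ k) 1 = x" by blast
  qed
  then show ?thesis unfolding cyclic_perm_def using pp by simp
qed



lemma key:
  assumes n: "n \<ge> 1" and pp: "p permutes {1..n}"
    and injf: "inj_on f {0..<n}" and imf: "f ` {0..<n} = {1..n}"
    and pf: "\<And>k. p (f k) = f (Suc k)" and fn: "f n = n" and f0: "f 0 = n"
    and w: "w = map f [0..<n]"
  shows "avoids321 n p \<longleftrightarrow>
    ({(i, j). 1 \<le> i \<and> i + 2 \<le> j \<and> j \<le> length w - 1 \<and>
      wat w (j+1) < wat w (i+1) \<and> wat w (i+1) < wat w i \<and> wat w i < wat w j} = {} \<and>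
     {(i, j). 1 \<le> i \<and> i + 2 \<le> j \<and> j \<le> length w - 1 \<and>
      wat w i < wat w j \<and> wat w j < wat w (j+1) \<and> wat w (j+1) < wat w (i+1)} = {} \<and>
     {(i, j). 1 \<le> i \<and> i + 2 \<le> j \<and> j \<le> length w - 1 \<and>
      wat w (i+1) < wat w (j+1) \<and> wat w (j+1) < wat w j \<and> wat w j < wat w i} = {} \<and>
     {(i, k). 1 \<le> i \<and> i + 2 \<le> k \<and> k \<le> n \<and>
      wat w k < wat w i \<and> wat w i < wat w (i+1) \<and> wat w (i+1) < p (wat w k)} = {})"
  (is "_ \<longleftrightarrow> (?S1 = {} \<and> ?S2 = {} \<and> ?S3 = {} \<and> ?S4 = {})")
proof -
  have len: "length w = n" using w by simp
  have W: "wat w (Suc k) = f k" if "k < n" for k using that w unfolding wat_def by simp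
  have fin: "f k \<in> {1..n}" if "k < n" for k using imf that by auto
  have pin: "p x \<in> {1..n}" if "x \<in> {1..n}" for x using permutes_in_image[OF pp, of x] that by simp
  show ?thesis
  proof
    assume av: "avoids321 n p"
    have "(i, j) \<notin> ?S1" for i j
    proof
      assume "(i, j) \<in> ?S1"
      then have H: "1 \<le> i" "i + 2 \<le> j" "j \<le> n - 1" "wat w (j+1) < wat w (i+1)"
          "wat w (i+1) < wat w i" "wat w i < wat w j" using len by auto
      obtain a where a: "i = Suc a" using H(1) by (cases i) auto
      obtain b where b: "j = Suc b" using H(2) by (cases j) auto
      have "a < n" "b < n" "Suc a < n" "Suc b < n" using a b H by auto
      then have "p (f b) < p (f a)" "p (f a) < f a" "f a < f b" using H W pf unfolding a b by auto
      moreover have "f a \<in> {1..n}" "f b \<in> {1..n}" using fin \<open>a < n\<close> \<open>b < n\<close> by auto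
      ultimately show False using def_321[OF pp, of "f a" "f b"] av by auto
    qed
    then have 1: "?S1 = {}" by auto
    have "(i, j) \<notin> ?S2" for i j
    proof
      assume "(i, j) \<in> ?S2"
      then have H: "1 \<le> i" "i + 2 \<le> j" "j \<le> n - 1" "wat w i < wat w j"
          "wat w j < wat w (j+1)" "wat w (j+1) < wat w (i+1)" using len by auto
      obtain a where a: "i = Suc a" using H(1) by (cases i) auto
      obtain b where b: "j = Suc b" using H(2) by (cases j) auto
      have "a < n" "b < n" "Suc a < n" "Suc b < n" using a b H by auto
      then have "f a < f b" "f b < p (f b)" "p (f b) < p (f a)" using H W pf unfolding a b by auto
      moreover have "f a \<in> {1..n}" "f b \<in> {1..n}" using fin \<open>a < n\<close> \<open>b < n\<close> by auto
      ultimately show False using exc_321[OF pp, of "f a" "f b"] av by auto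
    qed
    then have 2: "?S2 = {}" by auto
    have "(i, j) \<notin> ?S3" for i j
    proof
      assume "(i, j) \<in> ?S3"
      then have H: "1 \<le> i" "i + 2 \<le> j" "j \<le> n - 1" "wat w (i+1) < wat w (j+1)"
          "wat w (j+1) < wat w j" "wat w j < wat w i" using len by auto
      obtain a where a: "i = Suc a" using H(1) by (cases i) auto
      obtain b where b: "j = Suc b" using H(2) by (cases j) auto
      have "a < n" "b < n" "Suc a < n" "Suc b < n" using a b H by auto
      then have "p (f a) < p (f b)" "p (f b) < f b" "f b < f a" using H W pf unfolding a b by auto
      moreover have "f a \<in> {1..n}" "f b \<in> {1..n}" using fin \<open>a < n\<close> \<open>b < n\<close> by auto
      ultimately show False using def_321[OF pp, of "f b" "f a"] av by auto
    qed
    then have 3: "?S3 = {}" by auto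
    have "(i, j) \<notin> ?S4" for i j
    proof
      assume "(i, j) \<in> ?S4"
      then have H: "1 \<le> i" "i + 2 \<le> j" "j \<le> n" "wat w j < wat w i"
          "wat w i < wat w (i+1)" "wat w (i+1) < p (wat w j)" using len by auto
      obtain a where a: "i = Suc a" using H(1) by (cases i) auto
      obtain b where b: "j = Suc b" using H(2) by (cases j) auto
      have "a < n" "b < n" "Suc a < n" using a b H by auto
      then have "f b < f a" "f a < p (f a)" "p (f a) < p (f b)" using H W pf unfolding a b by auto
      moreover have "f a \<in> {1..n}" "f b \<in> {1..n}" using fin \<open>a < n\<close> \<open>b < n\<close> by auto
      ultimately show False using exc_321[OF pp, of "f b" "f a"] av by auto
    qed
    then have 4: "?S4 = {}" by auto
    show "?S1 = {} \<and> ?S2 = {} \<and> ?S3 = {} \<and> ?S4 = {}" using 1 2 3 4 by blast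
  next
    assume E: "?S1 = {} \<and> ?S2 = {} \<and> ?S3 = {} \<and> ?S4 = {}"
    have pos: "\<exists>r<n. f r = x" if "x \<in> {1..n}" for x
    proof -
      have "x \<in> f ` {0..<n}" using imf that by simp
      then show ?thesis by auto
    qed
    have finj: "r = s" if "r < n" "s < n" "f r = f s" for r s
      using injf that unfolding inj_on_def by auto
    show "avoids321 n p" unfolding avoids321_def
    proof
      assume "\<exists>a b c. 1 \<le> a \<and> a < b \<and> b < c \<and> c \<le> n \<and> p a > p b \<and> p b > p c"
      then obtain a b c where abc: "1 \<le> a" "a < b" "b < c" "c \<le> n" "p b < p a" "p c < p b" by blast
      have ain: "a \<in> {1..n}" and bin: "b \<in> {1..n}" and cin: "c \<in> {1..n}" using abc by auto
      consider "b < p b" | "p b < b" | "p b = b" by linarith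
      then show False
      proof cases
        case 1
        obtain r where r: "r < n" "f r = a" using pos[OF ain] by blast
        obtain s where s: "s < n" "f s = b" using pos[OF bin] by blast
        have pa: "p a \<le> n" using pin[OF ain] by simp
        have "r \<noteq> s" using r s abc by auto
        then consider "r < s" | "s < r" by linarith
        then show False
        proof cases
          case 1
          have "s \<noteq> Suc r" using pf[of r] r s abc \<open>b < p b\<close> by auto
          moreover have "s \<noteq> n - 1"
          proof
            assume "s = n - 1"
            then have "Suc s = n" using n by simp
            then have "p b = n" using pf[of s] s fn by simp
            then show False using pa abc by simp
          qed
          ultimately have "(Suc r, Suc s) \<in> ?S2" using 1 r s len W pf abc \<open>b < p b\<close> by auto
          then show False using E by blast
        next
          case 2
          have "r \<noteq> Suc s" using pf[of s] r s abc \<open>b < p b\<close> by auto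
          then have "(Suc s, Suc r) \<in> ?S4" using 2 r s len W pf abc \<open>b < p b\<close> by auto
          then show False using E by blast
        qed
      next
        case 2
        obtain r where r: "r < n" "f r = b" using pos[OF bin] by blast
        obtain s where s: "s < n" "f s = c" using pos[OF cin] by blast
        have pb: "p b \<le> n" using pin[OF bin] by simp
        have "r \<noteq> s" using r s abc by auto
        then consider "r < s" | "s < r" by linarith
        then show False
        proof cases
          case 1
          have "s \<noteq> Suc r" using pf[of r] r s abc \<open>p b < b\<close> by auto
          moreover have "s \<noteq> n - 1"
          proof
            assume "s = n - 1"
            then have "Suc s = n" using n by simp
            then have "p c = n" using pf[of s] s fn by simp
            then show False using pb abc by simp
          qed
          ultimately have "(Suc r, Suc s) \<in> ?S1" using 1 r s len W pf abc \<open>p b < b\<close> by auto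
          then show False using E by blast
        next
          case 2
          have "r \<noteq> Suc s" using pf[of s] r s abc \<open>p b < b\<close> by auto
          moreover have "r \<noteq> n - 1"
          proof
            assume "r = n - 1"
            then have "Suc r = n" using n by simp
            then have "p b = n" using pf[of r] r fn by simp
            then show False using bin \<open>p b < b\<close> by simp
          qed
          ultimately have "(Suc s, Suc r) \<in> ?S3" using 2 r s len W pf abc \<open>p b < b\<close> by auto
          then show False using E by blast
        qed
      next
        case 3
        obtain r where r: "r < n" "f r = b" using pos[OF bin] by blast
        show False
        proof (cases "Suc r < n")
          case True
          then have "f (Suc r) = f r" using pf[of r] r 3 by simp
          then show False using finj[of "Suc r" r] True r by simp
        next
          case False
          then have "Suc r = n" using r by simp
          then have "f r = f 0" using pf[of r] r 3 fn f0 by simp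
          then have "r = 0" using finj[of r 0] r by simp
          then have "n = 1" using \<open>Suc r = n\<close> by simp
          then show False using abc by simp
        qed
      qed
    qed
  qed
qed


lemma fin_pairs: "finite {(i, j). Q i \<and> i + 2 \<le> j \<and> j \<le> (m::nat) \<and> R i j}"
  by (rule finite_subset[of _ "{..m} \<times> {..m}"]) auto

theorem mainTheorem4:
  fixes n :: nat and p :: "nat \<Rightarrow> nat"
  assumes "n \<ge> 1" and "p permutes {1..n}"
  shows "(cyclic_perm n p \<and> avoids321 n p) \<longleftrightarrow>
         (wat (theta n p) 1 = n \<and>
          N_3241 (theta n p) + N_1423 (theta n p) + N_4132 (theta n p) + Mcount n p = 0)"
proof -
  note n = assms(1) and pp = assms(2)
  define f where "f = (\<lambda>k. (p ^^ k) n)"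
  have pf: "p (f k) = f (Suc k)" for k unfolding f_def by simp
  have f0: "f 0 = n" unfolding f_def by simp
  have K: "avoids321 n p \<longleftrightarrow>
      (N_3241 (theta n p) + N_1423 (theta n p) + N_4132 (theta n p) + Mcount n p = 0)"
    if cyc: "cyclic_perm n p"
  proof -
    note cs = cyclic_struct[OF n pp cyc, folded f_def]
    have fn: "f n = n" using cyclic_struct(4)[OF n pp cyc] unfolding f_def by simp
    note k = key[OF n pp cs(2) cs(3) pf fn f0 cs(1)]
    have "N_3241 (theta n p) + N_1423 (theta n p) + N_4132 (theta n p) + Mcount n p = 0
      \<longleftrightarrow> N_3241 (theta n p) = 0 \<and> N_1423 (theta n p) = 0 \<and> N_4132 (theta n p) = 0 \<and> Mcount n p = 0"
      by simp
    also have "\<dots> \<longleftrightarrow> avoids321 n p"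
      unfolding k N_3241_def N_1423_def N_4132_def Mcount_def Let_def
      by (simp only: card_0_eq[OF fin_pairs])
    finally show ?thesis by simp
  qed
  show ?thesis
  proof
    assume A: "cyclic_perm n p \<and> avoids321 n p"
    note cs = cyclic_struct[OF n pp conjunct1[OF A], folded f_def]
    have "wat (theta n p) 1 = n" unfolding cs(1) wat_def using n f0 by simp
    then show "wat (theta n p) 1 = n \<and>
          N_3241 (theta n p) + N_1423 (theta n p) + N_4132 (theta n p) + Mcount n p = 0"
      using K A by blast
  next
    assume B: "wat (theta n p) 1 = n \<and>
          N_3241 (theta n p) + N_1423 (theta n p) + N_4132 (theta n p) + Mcount n p = 0"
    have cyc: "cyclic_perm n p" using theta_first[OF n pp] B by blast
    then show "cyclic_perm n p \<and> avoids321 n p" using K[OF cyc] B by simp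
  qed
qed

end
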